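(* Let $G$ be a chordal graph and let $\{C_1,\dots,C_k\}$ be a perfect ordering of its maximal cliques. Define $c:=\max_{i}|C_i|=\omega(G)$ and $s:=\max_i|S_i|$, where $S_i:=(C_1\cup\dots\cup C_{i-1})\cap C_i$ (with $S_1=\emptyset$). If $f:\mathbb{R}\to\mathbb{R}$ is such that $f[-]$ preserves positivity on $\mathcal{P}_{K_c}$ and is Loewner super-additive on $\mathcal{P}_{K_s}$, then $f[-]$ preserves positivity on $\mathcal{P}_G$.
   Context: Graphs are finite and simple; chordal means every cycle on at least four vertices has a chord; $\omega(G)$ is the clique number; $K_m$ is the complete graph on $m$ vertices. For a sequence $B_1,\dots,B_k$ of vertex subsets, set $H_j=B_1\cup\dots\cup B_j$ ($H_0=\emptyset$), $S_j=H_{j-1}\cap B_j$; the sequence is a perfect ordering if (i) for every $1<i\le k$ there is $j<i$ with $S_i\subset B_j$, and (ii) each $S_i$ induces a complete graph. For a graph $H$ on $\{1,\dots,n\}$, $\mathcal{P}_H$ is the set of real symmetric positive semidefinite $n\times n$ matrices $M$ with $m_{ij}=0$ whenever $i\neq j$ and $(i,j)$ is not an edge (so $\mathcal{P}_{K_n}$ is all $n\times n$ PSD matrices). $f[M]:=(f(m_{ij}))$; $f[-]$ preserves positivity on $\mathcal{P}_H$ if $f[M]\in\mathcal{P}_H$ for all $M\in\mathcal{P}_H$. Loewner super-additivity on $\mathcal{P}_H$ is defined for $f$ with $f(0)=0$: $f[M+N]-f[M]-f[N]\in\mathcal{P}_H$ for all $M,N\in\mathcal{P}_H$. *)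

theory Defs
  imports Complex_Main
begin

definition simple_graph :: "nat \<Rightarrow> (nat \<Rightarrow> nat \<Rightarrow> bool) \<Rightarrow> bool" where
  "simple_graph n E \<longleftrightarrow> (\<forall>i j. E i j \<longrightarrow> i < n \<and> j < n) \<and>
     (\<forall>i j. E i j \<longrightarrow> E j i) \<and> (\<forall>i. \<not> E i i)"

definition is_cycle :: "nat \<Rightarrow> (nat \<Rightarrow> nat \<Rightarrow> bool) \<Rightarrow> nat list \<Rightarrow> bool" where
  "is_cycle n E vs \<longleftrightarrow> length vs \<ge> 3 \<and> distinct vs \<and> set vs \<subseteq> {0..<n} \<and>
     (\<forall>i < length vs. E (vs ! i) (vs ! ((i + 1) mod length vs)))"

definition has_chord :: "(nat \<Rightarrow> nat \<Rightarrow> bool) \<Rightarrow> nat list \<Rightarrow> bool" where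
  "has_chord E vs \<longleftrightarrow> (\<exists>i < length vs. \<exists>j < length vs. i \<noteq> j \<and>
     j \<noteq> (i + 1) mod length vs \<and> i \<noteq> (j + 1) mod length vs \<and> E (vs ! i) (vs ! j))"

definition chordal :: "nat \<Rightarrow> (nat \<Rightarrow> nat \<Rightarrow> bool) \<Rightarrow> bool" where
  "chordal n E \<longleftrightarrow> (\<forall>vs. is_cycle n E vs \<and> length vs \<ge> 4 \<longrightarrow> has_chord E vs)"

definition is_clique :: "nat \<Rightarrow> (nat \<Rightarrow> nat \<Rightarrow> bool) \<Rightarrow> nat set \<Rightarrow> bool" where
  "is_clique n E C \<longleftrightarrow> C \<subseteq> {0..<n} \<and> (\<forall>i\<in>C. \<forall>j\<in>C. i \<noteq> j \<longrightarrow> E i j)"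

definition maximal_clique :: "nat \<Rightarrow> (nat \<Rightarrow> nat \<Rightarrow> bool) \<Rightarrow> nat set \<Rightarrow> bool" where
  "maximal_clique n E C \<longleftrightarrow> is_clique n E C \<and> (\<forall>D. is_clique n E D \<and> C \<subseteq> D \<longrightarrow> D = C)"

text \<open>For a sequence B (0-indexed list), H_j = B_0 \<union> ... \<union> B_j and S_i = H_{i-1} \<inter> B_i (S_0 = {}).\<close>
definition sep_set :: "nat set list \<Rightarrow> nat \<Rightarrow> nat set" where
  "sep_set Bs i = (\<Union>j<i. Bs ! j) \<inter> Bs ! i"

definition perfect_ordering :: "nat \<Rightarrow> (nat \<Rightarrow> nat \<Rightarrow> bool) \<Rightarrow> nat set list \<Rightarrow> bool" where
  "perfect_ordering n E Bs \<longleftrightarrow>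
     (\<forall>i < length Bs. 0 < i \<longrightarrow> (\<exists>j < i. sep_set Bs i \<subseteq> Bs ! j)) \<and>
     (\<forall>i < length Bs. is_clique n E (sep_set Bs i))"

text \<open>Real matrices are functions nat \<Rightarrow> nat \<Rightarrow> real; only entries indexed in I matter.
  Symmetric positive semidefinite on the index set I.\<close>
definition psd_on :: "nat set \<Rightarrow> (nat \<Rightarrow> nat \<Rightarrow> real) \<Rightarrow> bool" where
  "psd_on I M \<longleftrightarrow> (\<forall>i\<in>I. \<forall>j\<in>I. M i j = M j i) \<and>
     (\<forall>x :: nat \<Rightarrow> real. 0 \<le> (\<Sum>i\<in>I. \<Sum>j\<in>I. x i * M i j * x j))"

definition in_PG :: "nat \<Rightarrow> (nat \<Rightarrow> nat \<Rightarrow> bool) \<Rightarrow> (nat \<Rightarrow> nat \<Rightarrow> real) \<Rightarrow> bool" where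
  "in_PG n E M \<longleftrightarrow> psd_on {0..<n} M \<and>
     (\<forall>i < n. \<forall>j < n. i \<noteq> j \<and> \<not> E i j \<longrightarrow> M i j = 0)"

definition complete_graph :: "nat \<Rightarrow> nat \<Rightarrow> nat \<Rightarrow> bool" where
  "complete_graph m i j \<longleftrightarrow> i < m \<and> j < m \<and> i \<noteq> j"

definition entrywise :: "(real \<Rightarrow> real) \<Rightarrow> (nat \<Rightarrow> nat \<Rightarrow> real) \<Rightarrow> (nat \<Rightarrow> nat \<Rightarrow> real)" where
  "entrywise f M = (\<lambda>i j. f (M i j))"

definition preserves_positivity :: "nat \<Rightarrow> (nat \<Rightarrow> nat \<Rightarrow> bool) \<Rightarrow> (real \<Rightarrow> real) \<Rightarrow> bool" where
  "preserves_positivity n E f \<longleftrightarrow> (\<forall>M. in_PG n E M \<longrightarrow> in_PG n E (entrywise f M))"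

definition loewner_superadditive :: "nat \<Rightarrow> (nat \<Rightarrow> nat \<Rightarrow> bool) \<Rightarrow> (real \<Rightarrow> real) \<Rightarrow> bool" where
  "loewner_superadditive n E f \<longleftrightarrow> f 0 = 0 \<and>
     (\<forall>M N. in_PG n E M \<and> in_PG n E N \<longrightarrow>
        in_PG n E (\<lambda>i j. f (M i j + N i j) - f (M i j) - f (N i j)))"

end

theory Submission
  imports Defs
begin


definition qf :: "nat set \<Rightarrow> (nat \<Rightarrow> nat \<Rightarrow> real) \<Rightarrow> (nat \<Rightarrow> real) \<Rightarrow> real" where
  "qf I N x = (\<Sum>i\<in>I. \<Sum>j\<in>I. x i * N i j * x j)"

lemma psd_on_iff: "psd_on I M \<longleftrightarrow> (\<forall>i\<in>I. \<forall>j\<in>I. M i j = M j i) \<and> (\<forall>x. 0 \<le> qf I M x)"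
  by (simp add: psd_on_def qf_def)

lemma psd_cong:
  assumes "psd_on I P" "\<And>i j. i \<in> I \<Longrightarrow> j \<in> I \<Longrightarrow> P i j = R i j"
  shows "psd_on I R"
proof -
  have "qf I R x = qf I P x" for x unfolding qf_def using assms(2) by (auto intro!: sum.cong)
  thus ?thesis using assms unfolding psd_on_iff by metis
qed

lemma psd_add:
  assumes "psd_on I P" "psd_on I R"
  shows "psd_on I (\<lambda>i j. P i j + R i j)"
proof -
  have "qf I (\<lambda>i j. P i j + R i j) x = qf I P x + qf I R x" for x
    unfolding qf_def by (simp add: distrib_left distrib_right sum.distrib)
  thus ?thesis using assms unfolding psd_on_iff by (metis add_nonneg_nonneg)
qed

lemma sum_if_sub:
  assumes "finite L" "K \<subseteq> L"
  shows "(\<Sum>i\<in>L. if i \<in> K then g i else 0) = sum g K"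
  using assms by (simp add: sum.If_cases Int_absorb1)

lemma qf_restrict:
  assumes "finite L" "K \<subseteq> L"
  shows "qf L P (\<lambda>i. if i \<in> K then x i else 0) = qf K P x"
proof -
  have "qf L P (\<lambda>i. if i \<in> K then x i else 0)
     = (\<Sum>i\<in>L. if i \<in> K then (\<Sum>j\<in>L. if j \<in> K then x i * P i j * x j else 0) else 0)"
    unfolding qf_def by (intro sum.cong) (auto intro!: sum.cong)
  also have "\<dots> = qf K P x" unfolding qf_def
    using assms by (simp add: sum_if_sub)
  finally show ?thesis .
qed

lemma psd_restrict:
  assumes "finite L" "K \<subseteq> L" "psd_on L P"
  shows "psd_on K P"
  using assms qf_restrict[OF assms(1,2)] unfolding psd_on_iff by (metis subsetD)

lemma qf_extend:
  assumes "finite L" "K \<subseteq> L"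
  shows "qf L (\<lambda>i j. if i \<in> K \<and> j \<in> K then P i j else 0) x = qf K P x"
proof -
  have "qf L (\<lambda>i j. if i \<in> K \<and> j \<in> K then P i j else 0) x
     = (\<Sum>i\<in>L. if i \<in> K then (\<Sum>j\<in>L. if j \<in> K then x i * P i j * x j else 0) else 0)"
    unfolding qf_def by (intro sum.cong) (auto intro!: sum.cong)
  also have "\<dots> = qf K P x" unfolding qf_def
    using assms by (simp add: sum_if_sub)
  finally show ?thesis .
qed

lemma psd_extend:
  assumes "finite L" "K \<subseteq> L" "psd_on K P"
  shows "psd_on L (\<lambda>i j. if i \<in> K \<and> j \<in> K then P i j else 0)"
  using assms qf_extend[OF assms(1,2)] unfolding psd_on_iff by auto

lemma psd_reindex:
  assumes "bij_betw h K J" "psd_on J N"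
  shows "psd_on K (\<lambda>a b. N (h a) (h b))"
proof -
  have sym: "\<forall>a\<in>K. \<forall>b\<in>K. N (h a) (h b) = N (h b) (h a)"
    using assms unfolding psd_on_iff bij_betw_def by auto
  have "0 \<le> qf K (\<lambda>a b. N (h a) (h b)) x" for x
  proof -
    define y where "y = (\<lambda>i. x (inv_into K h i))"
    have yh: "y (h a) = x a" if "a \<in> K" for a
      unfolding y_def using assms(1) that bij_betw_inv_into_left by metis
    have "qf J N y = (\<Sum>a\<in>K. \<Sum>j\<in>J. y (h a) * N (h a) j * y j)"
      unfolding qf_def using sum.reindex_bij_betw[OF assms(1), symmetric] by blast
    also have "\<dots> = (\<Sum>a\<in>K. \<Sum>b\<in>K. y (h a) * N (h a) (h b) * y (h b))"
      by (rule sum.cong[OF refl], rule sum.reindex_bij_betw[OF assms(1), symmetric])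
    also have "\<dots> = qf K (\<lambda>a b. N (h a) (h b)) x"
      unfolding qf_def by (intro sum.cong) (auto simp: yh)
    finally show ?thesis using assms(2) unfolding psd_on_iff by metis
  qed
  thus ?thesis using sym unfolding psd_on_iff by auto
qed



lemma psd_back:
  assumes "bij_betw h K J" "psd_on K P"
  shows "psd_on J (\<lambda>i j. P (inv_into K h i) (inv_into K h j))"
  using psd_reindex[OF bij_betw_inv_into[OF assms(1)] assms(2)] .

lemma pp_transfer:
  assumes "finite J" "card J \<le> m" "preserves_positivity m (complete_graph m) f" "psd_on J N"
  shows "psd_on J (\<lambda>i j. f (N i j))"
proof -
  obtain h where h: "bij_betw h {0..<card J} J" using ex_bij_betw_nat_finite[OF assms(1)] by blast
  let ?K = "{0..<card J}"
  define N' where "N' = (\<lambda>a b. if a \<in> ?K \<and> b \<in> ?K then N (h a) (h b) else 0)"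
  have "psd_on {0..<m} N'" unfolding N'_def
    by (rule psd_extend) (use assms psd_reindex[OF h assms(4)] in auto)
  hence "in_PG m (complete_graph m) N'" unfolding in_PG_def complete_graph_def by auto
  hence "psd_on {0..<m} (entrywise f N')" using assms(3) unfolding preserves_positivity_def in_PG_def by blast
  hence "psd_on ?K (entrywise f N')" by (rule psd_restrict[rotated 2]) (use assms in auto)
  hence "psd_on ?K (\<lambda>a b. f (N (h a) (h b)))" by (rule psd_cong) (auto simp: entrywise_def N'_def)
  hence "psd_on J (\<lambda>i j. f (N (h (inv_into ?K h i)) (h (inv_into ?K h j))))" by (rule psd_back[OF h])
  thus ?thesis by (rule psd_cong) (simp add: bij_betw_inv_into_right[OF h])
qed

lemma ls_transfer:
  assumes "finite J" "card J \<le> m" "loewner_superadditive m (complete_graph m) f"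
    "psd_on J N1" "psd_on J N2"
  shows "psd_on J (\<lambda>i j. f (N1 i j + N2 i j) - f (N1 i j) - f (N2 i j))"
proof -
  obtain h where h: "bij_betw h {0..<card J} J" using ex_bij_betw_nat_finite[OF assms(1)] by blast
  let ?K = "{0..<card J}"
  define A where "A = (\<lambda>a b. if a \<in> ?K \<and> b \<in> ?K then N1 (h a) (h b) else 0)"
  define B where "B = (\<lambda>a b. if a \<in> ?K \<and> b \<in> ?K then N2 (h a) (h b) else 0)"
  have "psd_on {0..<m} A" unfolding A_def
    by (rule psd_extend) (use assms psd_reindex[OF h assms(4)] in auto)
  hence 1: "in_PG m (complete_graph m) A" unfolding in_PG_def complete_graph_def by auto
  have "psd_on {0..<m} B" unfolding B_def
    by (rule psd_extend) (use assms psd_reindex[OF h assms(5)] in auto)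
  hence 2: "in_PG m (complete_graph m) B" unfolding in_PG_def complete_graph_def by auto
  have "psd_on {0..<m} (\<lambda>i j. f (A i j + B i j) - f (A i j) - f (B i j))"
    using assms(3) 1 2 unfolding loewner_superadditive_def in_PG_def by blast
  hence "psd_on ?K (\<lambda>i j. f (A i j + B i j) - f (A i j) - f (B i j))"
    by (rule psd_restrict[rotated 2]) (use assms in auto)
  hence "psd_on ?K (\<lambda>a b. f (N1 (h a) (h b) + N2 (h a) (h b)) - f (N1 (h a) (h b)) - f (N2 (h a) (h b)))"
    by (rule psd_cong) (auto simp: A_def B_def)
  hence "psd_on J (\<lambda>i j. f (N1 (h (inv_into ?K h i)) (h (inv_into ?K h j)) + N2 (h (inv_into ?K h i)) (h (inv_into ?K h j)))
      - f (N1 (h (inv_into ?K h i)) (h (inv_into ?K h j))) - f (N2 (h (inv_into ?K h i)) (h (inv_into ?K h j))))"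
    by (rule psd_back[OF h])
  thus ?thesis by (rule psd_cong) (simp add: bij_betw_inv_into_right[OF h])
qed



lemma qf_shift:
  assumes "finite I" "v \<in> I" "\<forall>i\<in>I. \<forall>j\<in>I. M i j = M j i"
  shows "qf I M (\<lambda>k. x k + (if k = v then t else 0)) =
         qf I M x + 2 * t * (\<Sum>i\<in>I. x i * M i v) + t^2 * M v v"
proof -
  let ?e = "\<lambda>k::nat. if k = v then t else 0"
  have split: "qf I M (\<lambda>k. x k + ?e k) = qf I M x + (\<Sum>i\<in>I. \<Sum>j\<in>I. ?e i * M i j * x j)
      + (\<Sum>i\<in>I. \<Sum>j\<in>I. x i * M i j * ?e j) + (\<Sum>i\<in>I. \<Sum>j\<in>I. ?e i * M i j * ?e j)"
    unfolding qf_def by (simp add: distrib_left distrib_right sum.distrib algebra_simps)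
  have a: "(\<Sum>i\<in>I. \<Sum>j\<in>I. ?e i * M i j * x j) = t * (\<Sum>j\<in>I. M v j * x j)"
  proof -
    have "(\<Sum>i\<in>I. \<Sum>j\<in>I. ?e i * M i j * x j) = (\<Sum>i\<in>I. if i = v then (\<Sum>j\<in>I. t * M i j * x j) else 0)"
      by (rule sum.cong) auto
    also have "\<dots> = t * (\<Sum>j\<in>I. M v j * x j)"
      using assms(1,2) by (simp add: sum_distrib_left mult.assoc)
    finally show ?thesis .
  qed
  have a2: "(\<Sum>j\<in>I. M v j * x j) = (\<Sum>i\<in>I. x i * M i v)"
    using assms(3,2) by (intro sum.cong) auto
  have b: "(\<Sum>i\<in>I. \<Sum>j\<in>I. x i * M i j * ?e j) = t * (\<Sum>i\<in>I. x i * M i v)"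
    using assms(1,2) by (simp add: if_distrib sum.delta sum_distrib_left mult.commute mult.left_commute cong: if_cong)
  have c: "(\<Sum>i\<in>I. \<Sum>j\<in>I. ?e i * M i j * ?e j) = t^2 * M v v"
  proof -
    have "(\<Sum>i\<in>I. \<Sum>j\<in>I. ?e i * M i j * ?e j) = (\<Sum>i\<in>I. if i = v then (\<Sum>j\<in>I. if j = v then t * M i j * t else 0) else 0)"
      by (intro sum.cong refl) (auto intro!: sum.cong)
    also have "\<dots> = t^2 * M v v"
      using assms(1,2) by (simp add: power2_eq_square)
    finally show ?thesis .
  qed
  show ?thesis using split a a2 b c by simp
qed



lemma qf_zero[simp]: "qf I M (\<lambda>_. 0) = 0" by (simp add: qf_def)

lemma qf_single:
  assumes "finite I" "v \<in> I" "\<forall>i\<in>I. \<forall>j\<in>I. M i j = M j i"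
  shows "qf I M (\<lambda>k. if k = v then t else 0) = t^2 * M v v"
  using qf_shift[OF assms, of "\<lambda>_. 0" t] by simp

lemma qf_rank1:
  "qf I (\<lambda>i j. M i v * M v j / d) x = (\<Sum>i\<in>I. x i * M i v) * (\<Sum>j\<in>I. M v j * x j) / d"
proof -
  have "(\<Sum>i\<in>I. x i * M i v) * (\<Sum>j\<in>I. M v j * x j) / d = (\<Sum>i\<in>I. \<Sum>j\<in>I. x i * M i v * (M v j * x j) / d)"
    by (simp add: sum_product sum_divide_distrib)
  also have "\<dots> = qf I (\<lambda>i j. M i v * M v j / d) x"
    unfolding qf_def by (intro sum.cong refl) (simp add: field_simps)
  finally show ?thesis ..
qed

lemma qf_diff: "qf I (\<lambda>i j. P i j - R i j) x = qf I P x - qf I R x"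
  unfolding qf_def by (simp add: right_diff_distrib left_diff_distrib sum_subtractf)

lemma elim_step:
  assumes "finite I" "v \<in> I" "psd_on I M"
  defines "M' \<equiv> (\<lambda>i j. M i j - M i v * M v j / M v v)"
  shows "psd_on I M'" "psd_on I (\<lambda>i j. M i v * M v j / M v v)"
    "\<And>j. j \<in> I \<Longrightarrow> M' v j = 0" "\<And>j. j \<in> I \<Longrightarrow> M' j v = 0"
proof -
  have sym: "\<forall>i\<in>I. \<forall>j\<in>I. M i j = M j i" using assms(3) unfolding psd_on_iff by auto
  have pos: "\<And>x. 0 \<le> qf I M x" using assms(3) unfolding psd_on_iff by auto
  let ?d = "M v v"
  have d0: "0 \<le> ?d" using pos[of "\<lambda>k. if k = v then 1 else 0"] qf_single[OF assms(1,2) sym, of 1] by simp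
  have zero: "M j v = 0" if "?d = 0" "j \<in> I" for j
  proof (rule ccontr)
    assume ne: "M j v \<noteq> 0"
    hence jv: "j \<noteq> v" using that by auto
    have s1: "(\<Sum>i\<in>I. (if i = j then 1 else 0) * M i v) = M j v"
    proof -
      have "(\<Sum>i\<in>I. (if i = j then 1 else 0) * M i v) = (\<Sum>i\<in>I. if i = j then M i v else 0)"
        by (rule sum.cong) auto
      thus ?thesis using that assms(1) by simp
    qed
    have s2: "(\<lambda>k. (if k = j then 1 else 0) + (if k = v then t else 0)) =
       (\<lambda>k. (if k = j then 1 else 0) + (if k = v then t else 0))" for t :: real ..
    define t where "t = - (M j j + 1) / (2 * M j v)"
    have "0 \<le> qf I M (\<lambda>k. (if k = j then 1 else 0) + (if k = v then t else 0))" by (rule pos)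
    also have "\<dots> = M j j + 2 * t * M j v"
      using qf_shift[OF assms(1,2) sym, of "\<lambda>k. if k = j then 1 else 0" t, unfolded s1]
        qf_single[OF assms(1) that(2) sym, of 1] that by simp
    also have "\<dots> = -1" unfolding t_def using ne by (simp add: field_simps)
    finally show False by simp
  qed
  define p where "p = (\<lambda>x. \<Sum>i\<in>I. x i * M i v)"
  have pp: "(\<Sum>j\<in>I. M v j * x j) = p x" for x
    unfolding p_def using sym assms(2) by (intro sum.cong) auto
  have r1sym: "\<forall>i\<in>I. \<forall>j\<in>I. M i v * M v j / M v v = M j v * M v i / M v v"
  proof (intro ballI)
    fix i j assume "i \<in> I" "j \<in> I"
    hence "M i v = M v i" "M v j = M j v" using sym assms(2) by blast+
    thus "M i v * M v j / M v v = M j v * M v i / M v v" by simp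
  qed
  have r1q: "0 \<le> qf I (\<lambda>i j. M i v * M v j / M v v) x" for x
  proof -
    have e: "(\<Sum>i\<in>I. x i * M i v) = p x" by (simp add: p_def)
    show ?thesis unfolding qf_rank1 pp e by (rule divide_nonneg_nonneg) (simp_all add: d0)
  qed
  show r1: "psd_on I (\<lambda>i j. M i v * M v j / M v v)"
    unfolding psd_on_iff using r1sym r1q by blast
  have "0 \<le> qf I M' x" for x
  proof -
    have eq: "qf I M' x = qf I M x - p x * p x / ?d"
      unfolding M'_def qf_diff qf_rank1 pp by (simp add: p_def)
    show ?thesis
    proof (cases "?d = 0")
      case True thus ?thesis using eq pos by simp
    next
      case False
      have "0 \<le> qf I M (\<lambda>k. x k + (if k = v then - p x / ?d else 0))" by (rule pos)
      also have "\<dots> = qf I M x - p x * p x / ?d"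
        using qf_shift[OF assms(1,2) sym, of x "- p x / ?d"] False
        unfolding p_def by (simp add: power2_eq_square field_simps)
      finally show ?thesis using eq by simp
    qed
  qed
  moreover have "\<forall>i\<in>I. \<forall>j\<in>I. M' i j = M' j i"
  proof (intro ballI)
    fix i j assume "i \<in> I" "j \<in> I"
    hence "M i j = M j i" "M i v = M v i" "M v j = M j v" using sym assms(2) by blast+
    thus "M' i j = M' j i" unfolding M'_def by simp
  qed
  ultimately show "psd_on I M'" unfolding psd_on_iff by auto
  show "M' v j = 0" if "j \<in> I" for j
    using zero[OF _ that] sym that assms(2) unfolding M'_def by (cases "?d = 0") auto
  show "M' j v = 0" if "j \<in> I" for j
    using zero[OF _ that] sym that assms(2) unfolding M'_def by (cases "?d = 0") auto
qed



lemma elim_set: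
  assumes "finite A" "finite I" "A \<subseteq> I" "S \<subseteq> I" "A \<inter> S = {}" "psd_on I M"
    "\<forall>i\<in>A. \<forall>j\<in>I. j \<notin> A \<union> S \<longrightarrow> M i j = 0"
  shows "\<exists>M2. psd_on I M2 \<and> psd_on I (\<lambda>i j. M i j - M2 i j) \<and>
     (\<forall>i\<in>I. \<forall>j\<in>I. (i \<in> A \<or> j \<in> A) \<longrightarrow> M2 i j = 0) \<and>
     (\<forall>i\<in>I. \<forall>j\<in>I. i \<notin> A \<and> j \<notin> A \<and> \<not> (i \<in> S \<and> j \<in> S) \<longrightarrow> M2 i j = M i j)"
  using assms(1,3-7)
proof (induction A arbitrary: M rule: finite_induct)
  case empty
  have "psd_on I (\<lambda>i j. M i j - M i j)"
    unfolding psd_on_iff qf_def by simp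
  thus ?case using empty by (intro exI[of _ M]) auto
next
  case (insert v A)
  have vI: "v \<in> I" using insert by auto
  have vS: "v \<notin> S" using insert by auto
  have sym: "\<forall>i\<in>I. \<forall>j\<in>I. M i j = M j i" using insert.prems(4) unfolding psd_on_iff by auto
  define M' where "M' = (\<lambda>i j. M i j - M i v * M v j / M v v)"
  note st = elim_step[OF assms(2) vI insert.prems(4), folded M'_def]
  have z3: "M' v j = 0" if "j \<in> I" for j using st(3)[OF that] unfolding M'_def by simp
  have z4: "M' j v = 0" if "j \<in> I" for j using st(4)[OF that] unfolding M'_def by simp
  have hyp: "\<forall>i\<in>A. \<forall>j\<in>I. j \<notin> A \<union> S \<longrightarrow> M' i j = 0"
  proof (intro ballI impI)
    fix i j assume i: "i \<in> A" and j: "j \<in> I" "j \<notin> A \<union> S"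
    show "M' i j = 0"
    proof (cases "j = v")
      case True thus ?thesis using z4[of i] i insert.prems(1) by auto
    next
      case False
      hence "M i j = 0" "M v j = 0" using insert.prems(5) i j by auto
      thus ?thesis unfolding M'_def by simp
    qed
  qed
  obtain M2 where M2: "psd_on I M2" "psd_on I (\<lambda>i j. M' i j - M2 i j)"
     "\<forall>i\<in>I. \<forall>j\<in>I. (i \<in> A \<or> j \<in> A) \<longrightarrow> M2 i j = 0"
     "\<forall>i\<in>I. \<forall>j\<in>I. i \<notin> A \<and> j \<notin> A \<and> \<not> (i \<in> S \<and> j \<in> S) \<longrightarrow> M2 i j = M' i j"
    using insert.IH[of M'] insert.prems st(1) hyp by auto
  show ?case
  proof (intro exI[of _ M2] conjI)
    show "psd_on I M2" by (rule M2(1))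
    have "psd_on I (\<lambda>i j. M i v * M v j / M v v + (M' i j - M2 i j))"
      by (rule psd_add[OF st(2) M2(2)])
    thus "psd_on I (\<lambda>i j. M i j - M2 i j)" by (rule psd_cong) (simp add: M'_def)
    show "\<forall>i\<in>I. \<forall>j\<in>I. (i \<in> insert v A \<or> j \<in> insert v A) \<longrightarrow> M2 i j = 0"
    proof (intro ballI impI)
      fix i j assume ij: "i \<in> I" "j \<in> I" "i \<in> insert v A \<or> j \<in> insert v A"
      show "M2 i j = 0"
      proof (cases "i \<in> A \<or> j \<in> A")
        case True thus ?thesis using M2(3) ij by auto
      next
        case False
        hence "i = v \<or> j = v" using ij by auto
        thus ?thesis using M2(4) ij False vS insert.hyps(2) z3 z4 by auto
      qed
    qed
    show "\<forall>i\<in>I. \<forall>j\<in>I. i \<notin> insert v A \<and> j \<notin> insert v A \<and> \<not> (i \<in> S \<and> j \<in> S) \<longrightarrow> M2 i j = M i j"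
    proof (intro ballI impI)
      fix i j assume ij: "i \<in> I" "j \<in> I" "i \<notin> insert v A \<and> j \<notin> insert v A \<and> \<not> (i \<in> S \<and> j \<in> S)"
      have "M i v * M v j = 0"
      proof (cases "i \<in> S")
        case True hence "j \<notin> S" using ij by auto
        thus ?thesis using insert.prems(5) ij by auto
      next
        case False hence "M v i = 0" using insert.prems(5) ij by auto
        thus ?thesis using sym ij vI by auto
      qed
      thus "M2 i j = M i j" using M2(4) ij unfolding M'_def by auto
    qed
  qed
qed



lemma max_clique_exists:
  assumes "is_clique n E K"
  shows "\<exists>C. maximal_clique n E C \<and> K \<subseteq> C"
proof -
  define F where "F = {D. is_clique n E D \<and> K \<subseteq> D}"
  have finF: "finite F" unfolding F_def is_clique_def
    by (rule finite_subset[of _ "Pow {0..<n}"]) auto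
  have KF: "K \<in> F" using assms unfolding F_def by auto
  define m where "m = Max (card ` F)"
  have "m \<in> card ` F" unfolding m_def using finF KF by (intro Max_in) auto
  then obtain D where D: "D \<in> F" "card D = m" by auto
  have "maximal_clique n E D"
    unfolding maximal_clique_def
  proof (intro conjI allI impI)
    show "is_clique n E D" using D unfolding F_def by auto
    fix D' assume D': "is_clique n E D' \<and> D \<subseteq> D'"
    hence "D' \<in> F" using D unfolding F_def by auto
    hence "card D' \<le> m" unfolding m_def using finF by auto
    moreover have "finite D'" using D' unfolding is_clique_def by (auto intro: finite_subset)
    ultimately show "D' = D" using D' D card_subset_eq card_mono by (metis antisym)
  qed
  thus ?thesis using D unfolding F_def by auto
qed

lemma edge_lemma:
  assumes po: "perfect_ordering n E Cs"
  shows "m < length Cs \<Longrightarrow> i \<in> Cs ! m \<Longrightarrow> j \<in> Cs ! m \<Longrightarrow>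
    i \<in> (\<Union>l<Suc k. Cs ! l) \<Longrightarrow> j \<in> (\<Union>l<Suc k. Cs ! l) \<Longrightarrow>
    \<exists>l\<le>k. i \<in> Cs ! l \<and> j \<in> Cs ! l"
proof (induction m rule: less_induct)
  case (less m)
  show ?case
  proof (cases "m \<le> k")
    case True thus ?thesis using less.prems by auto
  next
    case False
    hence "(\<Union>l<Suc k. Cs ! l) \<subseteq> (\<Union>l<m. Cs ! l)" by (auto intro!: bexI)
    hence "i \<in> sep_set Cs m" "j \<in> sep_set Cs m" using less.prems unfolding sep_set_def by auto
    moreover obtain m' where "m' < m" "sep_set Cs m \<subseteq> Cs ! m'"
      using po less.prems(1) False unfolding perfect_ordering_def by auto
    ultimately show ?thesis using less.IH[of m'] less.prems by auto
  qed
qed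



lemma psd_empty: "psd_on {} M" unfolding psd_on_def by simp

lemma main_claim:
  assumes sg: "simple_graph n E"
    and setCs: "set Cs = {C. maximal_clique n E C}"
    and po: "perfect_ordering n E Cs"
    and cdef: "c = Max {card (Cs ! i) | i. i < length Cs}"
    and sdef: "s = Max {card (sep_set Cs i) | i. i < length Cs}"
    and pp: "preserves_positivity c (complete_graph c) f"
    and ls: "loewner_superadditive s (complete_graph s) f"
  shows "k \<le> length Cs \<Longrightarrow> psd_on (\<Union>l<k. Cs ! l) M \<Longrightarrow>
     (\<forall>i\<in>(\<Union>l<k. Cs ! l). \<forall>j\<in>(\<Union>l<k. Cs ! l). i \<noteq> j \<and> \<not> E i j \<longrightarrow> M i j = 0) \<Longrightarrow>
     psd_on (\<Union>l<k. Cs ! l) (\<lambda>i j. f (M i j))"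
proof (induction k arbitrary: M)
  case 0 thus ?case by (simp add: psd_empty)
next
  case (Suc k)
  have f0: "f 0 = 0" using ls unfolding loewner_superadditive_def by auto
  have k: "k < length Cs" using Suc by auto
  define H where "H = (\<Union>l<k. Cs ! l)"
  define C where "C = Cs ! k"
  define S where "S = H \<inter> C"
  define A where "A = C - H"
  define I where "I = H \<union> C"
  have I: "(\<Union>l<Suc k. Cs ! l) = I" unfolding I_def H_def C_def by (auto simp: lessThan_Suc)
  have cl_sub: "\<And>l. l < length Cs \<Longrightarrow> Cs ! l \<subseteq> {0..<n}"
    using setCs unfolding maximal_clique_def is_clique_def by (metis (mono_tags, lifting) mem_Collect_eq nth_mem)
  have finI: "finite I" unfolding I_def H_def C_def using cl_sub k
    by (intro finite_UnI finite_UN_I) (auto intro: finite_subset[OF cl_sub])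
  have CI: "C \<subseteq> I" "H \<subseteq> I" "S \<subseteq> I" "A \<subseteq> I" "S \<subseteq> C" "S \<subseteq> H" unfolding I_def S_def A_def by auto
  have SC: "S = sep_set Cs k" unfolding S_def sep_set_def H_def C_def by simp
  have Scl: "is_clique n E S" using po k unfolding SC perfect_ordering_def by auto
  have psdM: "psd_on I M" using Suc.prems I by simp
  have patM: "\<And>i j. i \<in> I \<Longrightarrow> j \<in> I \<Longrightarrow> i \<noteq> j \<Longrightarrow> \<not> E i j \<Longrightarrow> M i j = 0"
    using Suc.prems(3) I by auto
  have symM: "\<And>i j. i \<in> I \<Longrightarrow> j \<in> I \<Longrightarrow> M i j = M j i" using psdM unfolding psd_on_iff by auto
  have noedge: "\<not> E i j" if "i \<in> A" "j \<in> H" "j \<notin> C" for i j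
  proof
    assume e: "E i j"
    have "i < n" "j < n" using sg e unfolding simple_graph_def by auto
    moreover have "E j i" using sg e unfolding simple_graph_def by auto
    ultimately have "is_clique n E {i, j}" using e unfolding is_clique_def by auto
    then obtain D where D: "maximal_clique n E D" "{i, j} \<subseteq> D" using max_clique_exists by blast
    then obtain m where m: "m < length Cs" "D = Cs ! m" using setCs by (metis in_set_conv_nth mem_Collect_eq)
    have "i \<in> (\<Union>l<Suc k. Cs ! l)" "j \<in> (\<Union>l<Suc k. Cs ! l)" using that I CI by auto
    then obtain l where "l \<le> k" "i \<in> Cs ! l" "j \<in> Cs ! l"
      using edge_lemma[OF po m(1), of i j k] D m by auto
    thus False using that unfolding A_def H_def C_def by (cases "l = k") auto
  qed
  have hypA: "\<forall>i\<in>A. \<forall>j\<in>I. j \<notin> A \<union> S \<longrightarrow> M i j = 0"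
  proof (intro ballI impI)
    fix i j assume "i \<in> A" "j \<in> I" "j \<notin> A \<union> S"
    hence "j \<in> H" "j \<notin> C" "i \<noteq> j" "i \<in> I" unfolding A_def S_def I_def by auto
    thus "M i j = 0" using noedge[OF \<open>i \<in> A\<close>] patM \<open>j \<in> I\<close> by auto
  qed
  have AS: "A \<inter> S = {}" unfolding A_def S_def by auto
  obtain M2 where M2: "psd_on I M2" "psd_on I (\<lambda>i j. M i j - M2 i j)"
     "\<forall>i\<in>I. \<forall>j\<in>I. (i \<in> A \<or> j \<in> A) \<longrightarrow> M2 i j = 0"
     "\<forall>i\<in>I. \<forall>j\<in>I. i \<notin> A \<and> j \<notin> A \<and> \<not> (i \<in> S \<and> j \<in> S) \<longrightarrow> M2 i j = M i j"
    using elim_set[OF finite_subset[OF CI(4) finI] finI CI(4) CI(3) AS psdM hypA] by blast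
  define M1 where "M1 = (\<lambda>i j. M i j - M2 i j)"
  have finC: "finite C" "finite S" "finite H" using finI CI by (auto intro: finite_subset)
  have cardC: "card C \<le> c" unfolding cdef C_def
    by (rule Max_ge) (use k in \<open>auto intro: finite_image_set\<close>)
  have cardS: "card S \<le> s" unfolding sdef SC
    by (rule Max_ge) (use k in \<open>auto intro: finite_image_set\<close>)
  have P1: "psd_on C (\<lambda>i j. f (M1 i j))"
    by (rule pp_transfer[OF finC(1) cardC pp]) (rule psd_restrict[OF finI CI(1)], unfold M1_def, rule M2(2))
  have P3: "psd_on S (\<lambda>i j. f (M1 i j + M2 i j) - f (M1 i j) - f (M2 i j))"
    by (rule ls_transfer[OF finC(2) cardS ls])
      (rule psd_restrict[OF finI CI(3)], unfold M1_def, rule M2(2), rule psd_restrict[OF finI CI(3) M2(1)])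
  have patM2: "\<forall>i\<in>H. \<forall>j\<in>H. i \<noteq> j \<and> \<not> E i j \<longrightarrow> M2 i j = 0"
  proof (intro ballI impI)
    fix i j assume ij: "i \<in> H" "j \<in> H" "i \<noteq> j \<and> \<not> E i j"
    hence "\<not> (i \<in> S \<and> j \<in> S)" using Scl unfolding is_clique_def by auto
    hence "M2 i j = M i j" using M2(4) ij CI unfolding A_def by auto
    thus "M2 i j = 0" using patM ij CI by auto
  qed
  have P2: "psd_on H (\<lambda>i j. f (M2 i j))"
    using Suc.IH[of M2] k psd_restrict[OF finI CI(2) M2(1)] patM2 unfolding H_def by auto
  have Q: "psd_on I (\<lambda>i j. ((if i \<in> C \<and> j \<in> C then f (M1 i j) else 0) +
       (if i \<in> H \<and> j \<in> H then f (M2 i j) else 0)) +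
       (if i \<in> S \<and> j \<in> S then f (M1 i j + M2 i j) - f (M1 i j) - f (M2 i j) else 0))"
    by (intro psd_add psd_extend[OF finI] CI P1 P2 P3)
  have "psd_on I (\<lambda>i j. f (M i j))"
  proof (rule psd_cong[OF Q])
    fix i j assume ij: "i \<in> I" "j \<in> I"
    have MM: "M i j = M1 i j + M2 i j" unfolding M1_def by simp
    show "((if i \<in> C \<and> j \<in> C then f (M1 i j) else 0) +
       (if i \<in> H \<and> j \<in> H then f (M2 i j) else 0)) +
       (if i \<in> S \<and> j \<in> S then f (M1 i j + M2 i j) - f (M1 i j) - f (M2 i j) else 0) = f (M i j)"
    proof (cases "i \<in> S \<and> j \<in> S")
      case True thus ?thesis using CI MM by auto
    next
      case nS: False
      show ?thesis
      proof (cases "i \<in> C \<and> j \<in> C")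
        case True
        hence "i \<in> A \<or> j \<in> A" using nS unfolding A_def S_def by auto
        hence "M2 i j = 0" using M2(3) ij by auto
        moreover have "\<not> (i \<in> H \<and> j \<in> H)" using nS True unfolding S_def by auto
        ultimately show ?thesis using True nS MM f0 by simp
      next
        case nC: False
        show ?thesis
        proof (cases "i \<in> H \<and> j \<in> H")
          case True
          hence "i \<notin> A" "j \<notin> A" unfolding A_def by auto
          hence "M2 i j = M i j" using M2(4) ij nS by auto
          thus ?thesis using True nS nC MM f0 by simp
        next
          case nH: False
          have "M i j = 0"
          proof (cases "i \<in> A")
            case True
            hence "j \<notin> A \<union> S" using nC nH ij unfolding A_def S_def I_def by auto
            thus ?thesis using hypA True ij by auto
          next
            case False
            hence "j \<in> A" "i \<notin> A \<union> S" using nC nH ij unfolding A_def S_def I_def by auto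
            thus ?thesis using hypA ij symM by metis
          qed
          thus ?thesis using nS nC nH f0 by auto
        qed
      qed
    qed
  qed
  thus ?case using I by simp
qed



theorem corollary3p8:
  fixes n :: nat and E :: "nat \<Rightarrow> nat \<Rightarrow> bool" and Cs :: "nat set list"
    and f :: "real \<Rightarrow> real" and c s :: nat
  assumes "simple_graph n E" and "chordal n E"
    and "distinct Cs" and "set Cs = {C. maximal_clique n E C}"
    and "perfect_ordering n E Cs"
    and "c = Max {card (Cs ! i) | i. i < length Cs}"
    and "s = Max {card (sep_set Cs i) | i. i < length Cs}"
    and "preserves_positivity c (complete_graph c) f"
    and "loewner_superadditive s (complete_graph s) f"
  shows "preserves_positivity n E f"
proof -
  have f0: "f 0 = 0" using assms(9) unfolding loewner_superadditive_def by auto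
  have HU: "(\<Union>l<length Cs. Cs ! l) = {0..<n}"
  proof
    show "(\<Union>l<length Cs. Cs ! l) \<subseteq> {0..<n}"
      using assms(4) unfolding maximal_clique_def is_clique_def
      by (auto dest!: nth_mem)
    show "{0..<n} \<subseteq> (\<Union>l<length Cs. Cs ! l)"
    proof
      fix v assume "v \<in> {0..<n}"
      hence "is_clique n E {v}" unfolding is_clique_def by auto
      then obtain D where "maximal_clique n E D" "v \<in> D" using max_clique_exists by blast
      then obtain m where "m < length Cs" "D = Cs ! m" using assms(4) by (metis in_set_conv_nth mem_Collect_eq)
      thus "v \<in> (\<Union>l<length Cs. Cs ! l)" using \<open>v \<in> D\<close> by auto
    qed
  qed
  show ?thesis unfolding preserves_positivity_def
  proof (intro allI impI)
    fix M assume M: "in_PG n E M"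
    have "psd_on {0..<n} (\<lambda>i j. f (M i j))"
      using main_claim[OF assms(1,4-9), of "length Cs" M] M HU unfolding in_PG_def by auto
    thus "in_PG n E (entrywise f M)"
      using M f0 unfolding in_PG_def entrywise_def by auto
  qed
qed


end
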